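(* Let $0\le r\le R$ be integers, assume $\mu<\infty$, $\mu p\neq 1$ and $\mu p q\neq 1$, and consider the model on the truncated tree $\mathbb{T}_R$ with the information starting at the vertex $x$ at distance $r$ from the root. Then $$ E_r (S) = \frac{1}{1 - \mu p} \bigg(1 + q \,\frac{1 - q^r}{1 - q} \, (1 - p) - (\mu p)^{R - r + 1} \,\frac{1 - pq (1 + (\mu - 1)(\mu pq)^r)}{1 - \mu pq} \bigg). $$
   Context: Let $(p_k)_{k\ge 0}$ be an offspring distribution with $p_0=0$, mean $\mu=\sum_k kp_k$ and variance $\sigma^2=\sum_k (k-\mu)^2p_k$. Let $\mathbb{T}$ be a Galton–Watson tree with root $0$ and offspring distribution $(p_k)$ (each vertex independently has $k$ offspring, i.e. edges going away from the root, with probability $p_k$). For an integer $R\ge 0$, the truncated tree $\mathbb{T}_R$ is the subgraph of $\mathbb{T}$ induced by the vertices at distance at most $R$ from the root. Fix $p,q\in(0,1)$. Each edge of the tree is replaced by two arrows: the arrow parent $\to$ offspring is open with probability $p$ and the arrow offspring $\to$ parent is open with probability $q$, all arrows independently of each other and of the tree. The source of the information is a vertex $x$ at distance $r$ from the root chosen independently of the offspring numbers of its ancestors and of the percolation (e.g. the vertex obtained from the root by always moving to the first offspring); let $0=x_0\to x_1\to\cdots\to x_r=x$ be the path from the root to $x$. The cluster is $\mathscr{C}=\{y: \text{there is a directed open path from } x \text{ to } y\}$ (including $x$), its elements are called wet, and $S=\operatorname{card}(\mathscr{C})$. $E_r$ and $P_r$ denote expectation and probability (over both the tree and the percolation) when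 the source is at distance $r$ from the root. *)

theory Defs
  imports "HOL-Probability.Probability"
begin

text \<open>Vertices of the (potential) Galton--Watson tree are Ulam--Harris labels (nat lists).
  A configuration assigns to every label v a triple (number of offspring of v,
  arrow parent(v) to v open, arrow v to parent(v) open).\<close>

type_synonym config = "nat list \<Rightarrow> nat \<times> bool \<times> bool"

definition offspring_mean :: "nat pmf \<Rightarrow> real" where
  "offspring_mean P = measure_pmf.expectation P real"

definition GW_perc :: "nat pmf \<Rightarrow> real \<Rightarrow> real \<Rightarrow> config measure" where
  "GW_perc P p q = PiM UNIV (\<lambda>_::nat list.
      measure_pmf (pair_pmf P (pair_pmf (bernoulli_pmf p) (bernoulli_pmf q))))"

definition is_vertex :: "config \<Rightarrow> nat \<Rightarrow> nat list \<Rightarrow> bool" where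
  "is_vertex \<omega> R v \<longleftrightarrow> length v \<le> R \<and> (\<forall>j < length v. v ! j < fst (\<omega> (take j v)))"

definition open_arrows :: "config \<Rightarrow> nat \<Rightarrow> (nat list \<times> nat list) set" where
  "open_arrows \<omega> R = {(u, w). is_vertex \<omega> R u \<and> is_vertex \<omega> R w \<and>
      ((\<exists>i. w = u @ [i] \<and> fst (snd (\<omega> w))) \<or> (\<exists>i. u = w @ [i] \<and> snd (snd (\<omega> u))))}"

definition wet_cluster :: "config \<Rightarrow> nat \<Rightarrow> nat list \<Rightarrow> nat list set" where
  "wet_cluster \<omega> R x = {y. (x, y) \<in> (open_arrows \<omega> R)\<^sup>*}"

end

theory Submission
  imports Defs
begin


lemma nn_list_split:
  fixes f :: "nat list \<Rightarrow> ennreal"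
  shows "(\<integral>\<^sup>+ s. f s \<partial>count_space UNIV) = f [] + (\<integral>\<^sup>+ i. \<integral>\<^sup>+ s. f (i # s) \<partial>count_space UNIV \<partial>count_space UNIV)"
proof -
  have b: "bij_betw (\<lambda>(i,s). i # s) (UNIV :: (nat \<times> nat list) set) (- {[]})"
    by (auto simp: bij_betw_def inj_on_def image_def neq_Nil_conv)
  have "(\<integral>\<^sup>+ s. f s \<partial>count_space UNIV) = (\<integral>\<^sup>+ s. f s * indicator {[]} s + f s * indicator (-{[]}) s \<partial>count_space UNIV)"
    by (intro nn_integral_cong) (auto split: split_indicator)
  also have "\<dots> = (\<integral>\<^sup>+ s. f s * indicator {[]} s \<partial>count_space UNIV) + (\<integral>\<^sup>+ s. f s * indicator (-{[]}) s \<partial>count_space UNIV)"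
    by (rule nn_integral_add) auto
  also have "(\<integral>\<^sup>+ s. f s * indicator {[]} s \<partial>count_space UNIV) = f []"
    by (subst nn_integral_indicator_finite) auto
  also have "(\<integral>\<^sup>+ s. f s * indicator (-{[]}) s \<partial>count_space UNIV) = (\<integral>\<^sup>+ s. f s \<partial>count_space (-{[]}))"
    by (simp add: nn_integral_count_space_indicator)
  also have "\<dots> = (\<integral>\<^sup>+ z. f ((\<lambda>(i,s). i # s) z) \<partial>count_space UNIV)"
    by (rule nn_integral_bij_count_space[OF b, symmetric])
  also have "\<dots> = (\<integral>\<^sup>+ i. \<integral>\<^sup>+ s. f (i # s) \<partial>count_space UNIV \<partial>count_space UNIV)"
    by (subst nn_integral_fst_count_space[symmetric]) simp
  finally show ?thesis .
qed

lemma nn_list_geom: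
  fixes a :: "nat \<Rightarrow> ennreal"
  shows "(\<integral>\<^sup>+ s. (if length s \<le> n then (\<Prod>j<length s. a (s ! j)) else 0) \<partial>count_space UNIV)
      = (\<Sum>m\<le>n. (\<integral>\<^sup>+ i. a i \<partial>count_space UNIV) ^ m)"
proof (induction n)
  case 0
  then show ?case by (subst nn_list_split) simp
next
  case (Suc n)
  let ?A = "\<integral>\<^sup>+ i. a i \<partial>count_space UNIV"
  have "(\<integral>\<^sup>+ s. (if length s \<le> Suc n then (\<Prod>j<length s. a (s ! j)) else 0) \<partial>count_space UNIV)
     = 1 + (\<integral>\<^sup>+ i. \<integral>\<^sup>+ s. a i * (if length s \<le> n then (\<Prod>j<length s. a (s ! j)) else 0) \<partial>count_space UNIV \<partial>count_space UNIV)"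
    by (subst nn_list_split) (auto intro!: nn_integral_cong simp: prod.lessThan_Suc_shift simp del: prod.lessThan_Suc)
  also have "\<dots> = 1 + ?A * (\<Sum>m\<le>n. ?A ^ m)"
    by (simp add: nn_integral_cmult nn_integral_multc Suc)
  also have "\<dots> = (\<Sum>m\<le>Suc n. ?A ^ m)"
    by (simp add: sum_distrib_left sum.atMost_Suc_shift del: sum.atMost_Suc)
  finally show ?case .
qed

definition TT :: "nat pmf \<Rightarrow> nat \<Rightarrow> ennreal" where
  "TT P i = emeasure (measure_pmf P) {n. i < n}"

lemma emeasure_triple:
  fixes P :: "nat pmf" and B1 B2 :: "bool pmf"
  shows "emeasure (measure_pmf (pair_pmf P (pair_pmf B1 B2))) {t. A (fst t) \<and> B (fst (snd t)) \<and> C (snd (snd t))}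
   = emeasure (measure_pmf P) {n. A n} * emeasure (measure_pmf B1) {d. B d} * emeasure (measure_pmf B2) {u. C u}"
proof -
  have e: "{t. A (fst t) \<and> B (fst (snd t)) \<and> C (snd (snd t))} = {n. A n} \<times> ({d. B d} \<times> {u. C u})"
    by auto
  show ?thesis
    unfolding e measure_pmf.emeasure_eq_measure
    by (simp add: measure_pmf_prob_product ennreal_mult'' mult.assoc)
qed

lemma bern_True: "0 \<le> p \<Longrightarrow> p \<le> 1 \<Longrightarrow> emeasure (measure_pmf (bernoulli_pmf p)) {d. d} = ennreal p"
proof -
  assume "0 \<le> p" "p \<le> 1"
  have "{d. d} = {True}" by auto
  then show ?thesis using \<open>0 \<le> p\<close> \<open>p \<le> 1\<close> by (simp add: emeasure_pmf_single)
qed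

lemma sum_TT:
  assumes "integrable (measure_pmf P) real"
  shows "(\<integral>\<^sup>+ i. TT P i \<partial>count_space UNIV) = ennreal (offspring_mean P)"
proof -
  have "(\<integral>\<^sup>+ x. ennreal_of_enat (enat x) \<partial>measure_pmf P) = (\<Sum>t. emeasure (measure_pmf P) {x \<in> space (measure_pmf P). t < enat x})"
    by (rule nn_integral_enat_function) simp
  moreover have "(\<integral>\<^sup>+ x. ennreal_of_enat (enat x) \<partial>measure_pmf P) = (\<integral>\<^sup>+ x. ennreal (real x) \<partial>measure_pmf P)"
    by (simp add: ennreal_of_nat_eq_real_of_nat)
  moreover have "(\<integral>\<^sup>+ x. ennreal (real x) \<partial>measure_pmf P) = ennreal (offspring_mean P)"
    unfolding offspring_mean_def by (rule nn_integral_eq_integral[OF assms]) simp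
  ultimately show ?thesis
    by (simp add: nn_integral_count_space_nat TT_def)
qed

lemma TT0: "pmf P 0 = 0 \<Longrightarrow> TT P 0 = 1"
proof -
  assume h: "pmf P 0 = 0"
  have "{n::nat. 0 < n} = UNIV - {0}" by auto
  then show ?thesis unfolding TT_def using h
    by (simp add: measure_pmf.emeasure_eq_measure measure_pmf.finite_measure_Diff measure_pmf_single)
qed

lemma mean_ge1:
  assumes "pmf P 0 = 0" "integrable (measure_pmf P) real"
  shows "1 \<le> offspring_mean P"
proof -
  have "ennreal (offspring_mean P) = (\<integral>\<^sup>+ i. TT P i \<partial>count_space UNIV)" using sum_TT[OF assms(2)] by simp
  also have "\<dots> \<ge> (\<integral>\<^sup>+ i. TT P i * indicator {0} i \<partial>count_space UNIV)"
    by (intro nn_integral_mono) (auto split: split_indicator)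
  finally have "ennreal (offspring_mean P) \<ge> 1"
    using TT0[OF assms(1)] by simp
  then show ?thesis
  proof (cases "0 \<le> offspring_mean P")
    case True
    then show ?thesis using \<open>ennreal (offspring_mean P) \<ge> 1\<close>
      by (metis ennreal_1 ennreal_le_iff)
  next
    case False
    then show ?thesis using \<open>ennreal (offspring_mean P) \<ge> 1\<close> by (simp add: ennreal_neg)
  qed
qed

lemma sum_TT_pos:
  assumes "pmf P 0 = 0" "integrable (measure_pmf P) real"
  shows "(\<integral>\<^sup>+ i. TT P i * indicator {i. i \<noteq> 0} i \<partial>count_space UNIV) = ennreal (offspring_mean P - 1)"
proof -
  have "(\<integral>\<^sup>+ i. TT P i \<partial>count_space UNIV) = (\<integral>\<^sup>+ i. TT P i * indicator {0} i + TT P i * indicator {i. i \<noteq> 0} i \<partial>count_space UNIV)"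
    by (intro nn_integral_cong) (auto split: split_indicator)
  also have "\<dots> = 1 + (\<integral>\<^sup>+ i. TT P i * indicator {i. i \<noteq> 0} i \<partial>count_space UNIV)"
    by (subst nn_integral_add) (auto simp: TT0[OF assms(1)])
  finally have "ennreal (offspring_mean P) = 1 + (\<integral>\<^sup>+ i. TT P i * indicator {i. i \<noteq> 0} i \<partial>count_space UNIV)"
    using sum_TT[OF assms(2)] by simp
  moreover have "ennreal (offspring_mean P - 1) = ennreal (offspring_mean P) - 1"
    using mean_ge1[OF assms] by (metis ennreal_1 ennreal_minus zero_le_one)
  ultimately show ?thesis
    by (simp add: ennreal_add_diff_cancel_left)
qed

abbreviation zr :: "nat \<Rightarrow> nat list" where "zr k \<equiv> replicate k 0"

definition Yr :: "nat \<Rightarrow> (nat \<times> nat list) set" where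
  "Yr r = {(k,s). k \<le> r \<and> (k < r \<longrightarrow> s = [] \<or> hd s \<noteq> 0)}"

definition cnd :: "config \<Rightarrow> nat \<Rightarrow> nat \<Rightarrow> nat \<Rightarrow> nat list \<Rightarrow> bool" where
  "cnd \<omega> r R k s \<longleftrightarrow> k + length s \<le> R \<and> (\<forall>j. k < j \<and> j \<le> r \<longrightarrow> snd (snd (\<omega> (zr j))))
     \<and> (\<forall>j<length s. s ! j < fst (\<omega> (zr k @ take j s)))
     \<and> (\<forall>j. 0 < j \<and> j \<le> length s \<longrightarrow> fst (snd (\<omega> (zr k @ take j s))))"

lemma Yr_surj: "\<exists>k s. (k, s) \<in> Yr r \<and> y = zr k @ s"
proof (induction r arbitrary: y)
  case 0
  show ?case by (rule exI[of _ 0], rule exI[of _ y]) (simp add: Yr_def)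
next
  case (Suc r)
  show ?case
  proof (cases y)
    case Nil
    then show ?thesis by (intro exI[of _ 0] exI[of _ "[]"]) (simp add: Yr_def)
  next
    case (Cons a y')
    show ?thesis
    proof (cases "a = 0")
      case True
      obtain k s where "(k, s) \<in> Yr r" "y' = zr k @ s" using Suc.IH by blast
      then show ?thesis using Cons True
        by (intro exI[of _ "Suc k"] exI[of _ s]) (auto simp: Yr_def)
    next
      case False
      then show ?thesis using Cons
        by (intro exI[of _ 0] exI[of _ y]) (auto simp: Yr_def)
    qed
  qed
qed

lemma Yr_inj_aux:
  assumes "(k, s) \<in> Yr r" "(k', s') \<in> Yr r" "zr k @ s = zr k' @ s'" "k < k'"
  shows False
proof -
  have "zr k' = zr k @ zr (k' - k)" using assms(4)
    by (metis le_add_diff_inverse less_imp_le replicate_add)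
  then have "s = zr (k' - k) @ s'" using assms(3) by simp
  then have "s \<noteq> []" "hd s = 0" using assms(4) by auto
  moreover have "k < r" using assms(2,4) by (auto simp: Yr_def)
  ultimately show False using assms(1) by (auto simp: Yr_def)
qed

lemma Yr_inj:
  assumes "(k, s) \<in> Yr r" "(k', s') \<in> Yr r" "zr k @ s = zr k' @ s'"
  shows "k = k' \<and> s = s'"
proof -
  have "k = k'"
    using Yr_inj_aux[OF assms] Yr_inj_aux[OF assms(2,1) assms(3)[symmetric]] linorder_neqE_nat by blast
  then show ?thesis using assms(3) by simp
qed

lemma Yr_bij: "bij_betw (\<lambda>(k, s). zr k @ s) (Yr r) UNIV"
proof -
  have "inj_on (\<lambda>(k, s). zr k @ s) (Yr r)"
    unfolding inj_on_def using Yr_inj by fastforce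
  moreover have "(\<lambda>(k, s). zr k @ s) ` Yr r = UNIV"
  proof safe
    fix y :: "nat list"
    obtain k s where "(k, s) \<in> Yr r" "y = zr k @ s" using Yr_surj by blast
    then show "y \<in> (\<lambda>(k, s). zr k @ s) ` Yr r" by force
  qed auto
  ultimately show ?thesis unfolding bij_betw_def by simp
qed

lemma is_vertex_snoc:
  "is_vertex \<omega> R (v @ [i]) \<longleftrightarrow> is_vertex \<omega> R v \<and> length v < R \<and> i < fst (\<omega> v)"
  unfolding is_vertex_def
  by (auto simp: nth_append less_Suc_eq)

lemma is_vertex_Nil: "is_vertex \<omega> R []"
  by (simp add: is_vertex_def)

lemma is_vertex_zr:
  assumes "\<forall>v. 0 < fst (\<omega> v)" "j \<le> R"
  shows "is_vertex \<omega> R (zr j)"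
  using assms by (simp add: is_vertex_def)

lemma zr_Suc: "zr (Suc j) = zr j @ [0]"
  by (simp add: replicate_append_same)

lemma cnd_base: "r \<le> R \<Longrightarrow> cnd \<omega> r R r []"
  by (auto simp: cnd_def)

lemma wet_char_if:
  assumes hN: "\<forall>v. 0 < fst (\<omega> v)" and rR: "r \<le> R" and ks: "(k, s) \<in> Yr r"
    and c: "cnd \<omega> r R k s"
  shows "zr k @ s \<in> wet_cluster \<omega> R (zr r)"
proof -
  let ?A = "open_arrows \<omega> R"
  have kr: "k \<le> r" using ks by (simp add: Yr_def)
  have c1: "k + length s \<le> R" and c2: "\<And>j. k < j \<Longrightarrow> j \<le> r \<Longrightarrow> snd (snd (\<omega> (zr j)))"
    and c3: "\<And>j. j < length s \<Longrightarrow> s ! j < fst (\<omega> (zr k @ take j s))"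
    and c4: "\<And>j. 0 < j \<Longrightarrow> j \<le> length s \<Longrightarrow> fst (snd (\<omega> (zr k @ take j s)))"
    using c unfolding cnd_def by auto
  have up: "(zr r, zr j) \<in> ?A\<^sup>*" if "k \<le> j" "j \<le> r" for j
    using that
  proof (induction "r - j" arbitrary: j)
    case 0
    then have "j = r" by simp
    then show ?case by simp
  next
    case (Suc d)
    then have j1: "Suc j \<le> r" "k < Suc j" by auto
    have IH: "(zr r, zr (Suc j)) \<in> ?A\<^sup>*" using Suc.hyps(1)[of "Suc j"] Suc.hyps(2) j1 by simp
    have jR: "Suc j \<le> R" "j \<le> R" using j1 rR by auto
    have v1: "is_vertex \<omega> R (zr (Suc j))" "is_vertex \<omega> R (zr j)"
      by (rule is_vertex_zr[OF hN jR(1)], rule is_vertex_zr[OF hN jR(2)])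
    have u: "snd (snd (\<omega> (zr (Suc j))))" by (rule c2[OF j1(2) j1(1)])
    have "(zr (Suc j), zr j) \<in> ?A"
      unfolding open_arrows_def using v1 u zr_Suc[of j] by blast
    then show ?case using IH by simp
  qed
  have vert: "is_vertex \<omega> R (zr k @ take j s)" if "j \<le> length s" for j
    using that
  proof (induction j)
    case 0
    then show ?case using is_vertex_zr[OF hN, of k] kr rR by simp
  next
    case (Suc j)
    then have jl: "j < length s" by simp
    have "take (Suc j) s = take j s @ [s ! j]" using jl by (simp add: take_Suc_conv_app_nth)
    then show ?case using Suc jl c3[OF jl] c1 is_vertex_snoc[of \<omega> R "zr k @ take j s" "s ! j"]
      by simp
  qed
  have down: "(zr k, zr k @ take j s) \<in> ?A\<^sup>*" if "j \<le> length s" for j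
    using that
  proof (induction j)
    case 0
    then show ?case by simp
  next
    case (Suc j)
    then have jl: "j < length s" by simp
    have e: "zr k @ take (Suc j) s = (zr k @ take j s) @ [s ! j]" using jl by (simp add: take_Suc_conv_app_nth)
    have "(zr k @ take j s, zr k @ take (Suc j) s) \<in> ?A"
      unfolding open_arrows_def using vert[of j] vert[of "Suc j"] jl c4[of "Suc j"] e by auto
    then show ?case using Suc jl by (meson Suc_leD rtrancl.rtrancl_into_rtrancl)
  qed
  have "(zr r, zr k @ s) \<in> ?A\<^sup>*"
    using up[of k] kr down[of "length s"] by (simp add: rtrancl_trans)
  then show ?thesis by (simp add: wet_cluster_def)
qed

lemma wet_char_only:
  assumes hN: "\<forall>v. 0 < fst (\<omega> v)" and rR: "r \<le> R"
    and y: "(zr r, y) \<in> (open_arrows \<omega> R)\<^sup>*"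
  shows "\<exists>k s. (k, s) \<in> Yr r \<and> y = zr k @ s \<and> cnd \<omega> r R k s"
  using y
proof (induction rule: rtrancl_induct)
  case base
  show ?case using cnd_base[OF rR] by (intro exI[of _ r] exI[of _ "[]"]) (auto simp: Yr_def)
next
  case (step y w)
  obtain k s where ks: "(k, s) \<in> Yr r" and ye: "y = zr k @ s" and c: "cnd \<omega> r R k s"
    using step.IH by blast
  have kr: "k \<le> r" and hd: "k < r \<Longrightarrow> s = [] \<or> hd s \<noteq> 0" using ks by (auto simp: Yr_def)
  have c1: "k + length s \<le> R" and c2: "\<And>j. k < j \<Longrightarrow> j \<le> r \<Longrightarrow> snd (snd (\<omega> (zr j)))"
    and c3: "\<And>j. j < length s \<Longrightarrow> s ! j < fst (\<omega> (zr k @ take j s))"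
    and c4: "\<And>j. 0 < j \<Longrightarrow> j \<le> length s \<Longrightarrow> fst (snd (\<omega> (zr k @ take j s)))"
    using c unfolding cnd_def by auto
  from step.hyps(2) have vy: "is_vertex \<omega> R y" and vw: "is_vertex \<omega> R w"
    and dir: "(\<exists>i. w = y @ [i] \<and> fst (snd (\<omega> w))) \<or> (\<exists>i. y = w @ [i] \<and> snd (snd (\<omega> y)))"
    unfolding open_arrows_def by auto
  from dir show ?case
  proof
    assume "\<exists>i. w = y @ [i] \<and> fst (snd (\<omega> w))"
    then obtain i where we: "w = y @ [i]" and dw: "fst (snd (\<omega> w))" by blast
    from vw have ly: "length y < R" and iN: "i < fst (\<omega> y)" unfolding we by (auto simp: is_vertex_snoc)
    show ?thesis
    proof (cases "s = [] \<and> k < r \<and> i = 0")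
      case True
      then have w2: "w = zr (Suc k)" using we ye zr_Suc by simp
      have "cnd \<omega> r R (Suc k) []"
        using True ly ye c2 unfolding cnd_def by auto
      then show ?thesis using w2 True by (intro exI[of _ "Suc k"] exI[of _ "[]"]) (auto simp: Yr_def)
    next
      case False
      have Y: "(k, s @ [i]) \<in> Yr r"
        using False kr hd by (auto simp: Yr_def hd_append split: if_splits)
      have "cnd \<omega> r R k (s @ [i])"
        unfolding cnd_def
      proof (intro conjI allI impI)
        show "k + length (s @ [i]) \<le> R" using ly ye by simp
        show "snd (snd (\<omega> (zr j)))" if "k < j \<and> j \<le> r" for j using c2 that by simp
        show "(s @ [i]) ! j < fst (\<omega> (zr k @ take j (s @ [i])))" if "j < length (s @ [i])" for j
        proof (cases "j < length s")
          case True then show ?thesis using c3[OF True] by (simp add: nth_append)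
        next
          case False then have "j = length s" using that by simp
          then show ?thesis using iN ye by simp
        qed
        show "fst (snd (\<omega> (zr k @ take j (s @ [i]))))" if "0 < j \<and> j \<le> length (s @ [i])" for j
        proof (cases "j \<le> length s")
          case True then show ?thesis using c4[of j] that by simp
        next
          case False then have "j = Suc (length s)" using that by simp
          then show ?thesis using dw we ye by simp
        qed
      qed
      then show ?thesis using Y we ye by (intro exI[of _ k] exI[of _ "s @ [i]"]) simp
    qed
  next
    assume "\<exists>i. y = w @ [i] \<and> snd (snd (\<omega> y))"
    then obtain i where we: "y = w @ [i]" and uy: "snd (snd (\<omega> y))" by blast
    show ?thesis
    proof (cases "s = []")
      case True
      then have yz: "y = zr k" using ye by simp
      then have k0: "0 < k" using we by (cases k) auto
      then obtain k' where kk: "k = Suc k'" by (cases k) auto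
      have w2: "w = zr k'" using yz we kk zr_Suc[of k'] by simp
      have "cnd \<omega> r R k' []"
        unfolding cnd_def
      proof (intro conjI allI impI)
        show "k' + length [] \<le> R" using c1 kk by simp
        show "snd (snd (\<omega> (zr j)))" if "k' < j \<and> j \<le> r" for j
        proof (cases "j = k")
          case True then show ?thesis using uy yz by simp
        next
          case False then show ?thesis using c2[of j] that kk by simp
        qed
      qed auto
      moreover have "(k', []) \<in> Yr r" using kr kk by (simp add: Yr_def)
      ultimately show ?thesis using w2 by (intro exI[of _ k'] exI[of _ "[]"]) simp
    next
      case False
      have w2: "w = zr k @ butlast s" using we ye False
        by (metis butlast_append butlast_snoc)
      have Y: "(k, butlast s) \<in> Yr r" using kr hd False
        by (cases s rule: rev_cases) (auto simp: Yr_def hd_append split: if_splits)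
      have "cnd \<omega> r R k (butlast s)"
        unfolding cnd_def
      proof (intro conjI allI impI)
        show "k + length (butlast s) \<le> R" using c1 by simp
        show "snd (snd (\<omega> (zr j)))" if "k < j \<and> j \<le> r" for j using c2 that by simp
        show "butlast s ! j < fst (\<omega> (zr k @ take j (butlast s)))" if "j < length (butlast s)" for j
          using c3[of j] that by (simp add: nth_butlast take_butlast)
        show "fst (snd (\<omega> (zr k @ take j (butlast s))))" if "0 < j \<and> j \<le> length (butlast s)" for j
        proof -
          have "take j (butlast s) = take j s" using that False
            by (metis butlast_conv_take length_butlast min.absorb1 take_take)
          then show ?thesis using c4[of j] that by auto
        qed
      qed
      then show ?thesis using Y w2 by (intro exI[of _ k] exI[of _ "butlast s"]) simp
    qed
  qed
qed

lemma wet_char: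
  assumes hN: "\<forall>v. 0 < fst (\<omega> v)" and rR: "r \<le> R" and ks: "(k, s) \<in> Yr r"
  shows "zr k @ s \<in> wet_cluster \<omega> R (zr r) \<longleftrightarrow> cnd \<omega> r R k s"
proof
  assume "zr k @ s \<in> wet_cluster \<omega> R (zr r)"
  then have "(zr r, zr k @ s) \<in> (open_arrows \<omega> R)\<^sup>*" by (simp add: wet_cluster_def)
  then obtain k' s' where "(k', s') \<in> Yr r" "zr k @ s = zr k' @ s'" "cnd \<omega> r R k' s'"
    using wet_char_only[OF hN rR] by blast
  then show "cnd \<omega> r R k s" using Yr_inj[OF ks] by metis
qed (rule wet_char_if[OF hN rR ks])

definition Tpmf :: "nat pmf \<Rightarrow> real \<Rightarrow> real \<Rightarrow> (nat \<times> bool \<times> bool) pmf" where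
  "Tpmf P p q = pair_pmf P (pair_pmf (bernoulli_pmf p) (bernoulli_pmf q))"

definition Aset :: "nat \<Rightarrow> nat \<Rightarrow> nat list set" where
  "Aset r k = zr ` {k<..r}"
definition Bset :: "nat \<Rightarrow> nat list \<Rightarrow> nat list set" where
  "Bset k s = (\<lambda>j. zr k @ take j s) ` {..length s}"
definition Xf :: "nat \<Rightarrow> nat \<Rightarrow> nat list \<Rightarrow> nat list \<Rightarrow> (nat \<times> bool \<times> bool) set" where
  "Xf r k s v = (if v \<in> Aset r k then {t. snd (snd t)}
     else {t. (k < length v \<longrightarrow> fst (snd t)) \<and> (length v < k + length s \<longrightarrow> s ! (length v - k) < fst t)})"

lemma AB_disj:
  assumes "(k, s) \<in> Yr r"
  shows "Aset r k \<inter> Bset k s = {}"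
proof (rule ccontr)
  assume "Aset r k \<inter> Bset k s \<noteq> {}"
  then obtain j i where j: "k < j" "j \<le> r" and i: "i \<le> length s" and e: "zr j = zr k @ take i s"
    unfolding Aset_def Bset_def by auto
  have "j = k + i" using e i by (metis length_append length_replicate length_take min.absorb2)
  then have "i > 0" using j by simp
  have "zr j = zr k @ zr i" using \<open>j = k + i\<close> by (simp add: replicate_add)
  then have "take i s = zr i" using e by simp
  then have "s \<noteq> []" "hd s = 0" using \<open>i > 0\<close> i
    by (auto simp: hd_conv_nth) (metis hd_conv_nth hd_replicate hd_take neq0_conv replicate_empty take_eq_Nil)
  moreover have "k < r" using j by simp
  ultimately show False using assms by (auto simp: Yr_def)
qed

lemma cnd_Collect:
  assumes ks: "(k, s) \<in> Yr r" and len: "k + length s \<le> R"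
  shows "cnd \<omega> r R k s \<longleftrightarrow> (\<forall>v \<in> Aset r k \<union> Bset k s. \<omega> v \<in> Xf r k s v)"
proof -
  have dj: "Aset r k \<inter> Bset k s = {}" by (rule AB_disj[OF ks])
  have XB: "Xf r k s (zr k @ take j s) = {t. (0 < j \<longrightarrow> fst (snd t)) \<and> (j < length s \<longrightarrow> s ! j < fst t)}"
    if "j \<le> length s" for j
  proof -
    have "zr k @ take j s \<in> Bset k s" using that by (auto simp: Bset_def)
    then have "zr k @ take j s \<notin> Aset r k" using dj by auto
    then show ?thesis using that by (simp add: Xf_def min_def)
  qed
  have XA: "Xf r k s (zr j) = {t. snd (snd t)}" if "k < j" "j \<le> r" for j
    using that by (auto simp: Xf_def Aset_def)
  show ?thesis
  proof
    assume c: "cnd \<omega> r R k s"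
    show "\<forall>v \<in> Aset r k \<union> Bset k s. \<omega> v \<in> Xf r k s v"
    proof
      fix v assume "v \<in> Aset r k \<union> Bset k s"
      then show "\<omega> v \<in> Xf r k s v"
      proof
        assume "v \<in> Aset r k"
        then obtain j where "k < j" "j \<le> r" "v = zr j" by (auto simp: Aset_def)
        then show ?thesis using c XA by (auto simp: cnd_def)
      next
        assume "v \<in> Bset k s"
        then obtain j where "j \<le> length s" "v = zr k @ take j s" by (auto simp: Bset_def)
        then show ?thesis using c XB by (auto simp: cnd_def)
      qed
    qed
  next
    assume h: "\<forall>v \<in> Aset r k \<union> Bset k s. \<omega> v \<in> Xf r k s v"
    show "cnd \<omega> r R k s"
      unfolding cnd_def
    proof (intro conjI allI impI)
      show "k + length s \<le> R" by (rule len)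
      show "snd (snd (\<omega> (zr j)))" if "k < j \<and> j \<le> r" for j
        using h[rule_format, of "zr j"] that XA[of j] by (auto simp: Aset_def)
      show "s ! j < fst (\<omega> (zr k @ take j s))" if "j < length s" for j
        using h[rule_format, of "zr k @ take j s"] that XB[of j] by (auto simp: Bset_def)
      show "fst (snd (\<omega> (zr k @ take j s)))" if "0 < j \<and> j \<le> length s" for j
        using h[rule_format, of "zr k @ take j s"] that XB[of j] by (auto simp: Bset_def)
    qed
  qed
qed

lemma XB:
  assumes "(k, s) \<in> Yr r" "j \<le> length s"
  shows "Xf r k s (zr k @ take j s) = {t. (0 < j \<longrightarrow> fst (snd t)) \<and> (j < length s \<longrightarrow> s ! j < fst t)}"
proof -
  have "zr k @ take j s \<in> Bset k s" using assms by (auto simp: Bset_def)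
  then have "zr k @ take j s \<notin> Aset r k" using AB_disj[OF assms(1)] by auto
  then show ?thesis using assms by (simp add: Xf_def min_def)
qed

lemma XA: "v \<in> Aset r k \<Longrightarrow> Xf r k s v = {t. snd (snd t)}"
  by (simp add: Xf_def)

lemma emeasure_T_up:
  assumes "0 \<le> p" "p \<le> 1" "0 \<le> q" "q \<le> 1"
  shows "emeasure (measure_pmf (Tpmf P p q)) {t. snd (snd t)} = ennreal q"
proof -
  show ?thesis
    using emeasure_triple[of P "bernoulli_pmf p" "bernoulli_pmf q" "\<lambda>_. True" "\<lambda>_. True" "\<lambda>u. u"] assms
    by (simp add: Tpmf_def bern_True)
qed

lemma emeasure_T_down:
  assumes "0 \<le> p" "p \<le> 1" "0 \<le> q" "q \<le> 1"
  shows "emeasure (measure_pmf (Tpmf P p q)) {t. (c1 \<longrightarrow> fst (snd t)) \<and> (c2 \<longrightarrow> i < fst t)}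
    = (if c2 then TT P i else 1) * (if c1 then ennreal p else 1)"
proof -
  show ?thesis
    using emeasure_triple[of P "bernoulli_pmf p" "bernoulli_pmf q" "\<lambda>n. c2 \<longrightarrow> i < n" "\<lambda>d. c1 \<longrightarrow> d" "\<lambda>_. True"] assms
    by (cases c1; cases c2) (simp_all add: Tpmf_def bern_True TT_def conj_commute)
qed

lemma prod_shape:
  fixes c :: ennreal and n :: nat
  shows "(\<Prod>j\<le>n. (if j < n then f j else 1) * (if 0 < j then c else 1)) = (\<Prod>j<n. c * f j)"
proof -
  have b: "(\<Prod>j\<le>m. (if 0 < j then c else 1)) = c ^ m" for m
    by (induction m) (auto simp: mult.commute)
  have a: "(\<Prod>j\<le>n. (if j < n then f j else 1)) = (\<Prod>j<n. f j)"
  proof -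
    have e: "{..n} = insert n {..<n}" by auto
    have "(\<Prod>j\<in>{..<n}. (if j < n then f j else 1)) = (\<Prod>j<n. f j)"
      by (rule prod.cong) auto
    then show ?thesis unfolding e by simp
  qed
  show ?thesis
    by (simp add: prod.distrib a b prod_constant mult.commute)
qed

lemma PiM_product: "product_prob_space (\<lambda>_::nat list. measure_pmf (Tpmf P p q))"
  by (rule product_prob_spaceI) (rule prob_space_measure_pmf)

lemma GW_eq: "GW_perc P p q = PiM UNIV (\<lambda>_::nat list. measure_pmf (Tpmf P p q))"
  by (simp add: GW_perc_def Tpmf_def)

lemma event_meas:
  assumes "0 \<le> p" "p \<le> 1" "0 \<le> q" "q \<le> 1" and ks: "(k, s) \<in> Yr r"
  shows "emeasure (GW_perc P p q) {\<omega> \<in> space (GW_perc P p q). cnd \<omega> r R k s}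
    = (if k + length s \<le> R then ennreal q ^ (r - k) * (\<Prod>j<length s. ennreal p * TT P (s ! j)) else 0)"
    and "{\<omega> \<in> space (GW_perc P p q). cnd \<omega> r R k s} \<in> sets (GW_perc P p q)"
proof -
  interpret PP: product_prob_space "\<lambda>_::nat list. measure_pmf (Tpmf P p q)" UNIV
    by (rule PiM_product)
  let ?M = "PiM UNIV (\<lambda>_::nat list. measure_pmf (Tpmf P p q))"
  have fin: "finite (Aset r k \<union> Bset k s)" by (simp add: Aset_def Bset_def)
  have "emeasure ?M {\<omega> \<in> space ?M. cnd \<omega> r R k s}
    = (if k + length s \<le> R then ennreal q ^ (r - k) * (\<Prod>j<length s. ennreal p * TT P (s ! j)) else 0)
     \<and> {\<omega> \<in> space ?M. cnd \<omega> r R k s} \<in> sets ?M"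
  proof (cases "k + length s \<le> R")
    case False
    then have E: "{\<omega> \<in> space ?M. cnd \<omega> r R k s} = {}" by (auto simp: cnd_def)
    show ?thesis unfolding E using False by simp
  next
    case True
    have e: "{\<omega> \<in> space ?M. cnd \<omega> r R k s} = {\<omega> \<in> space ?M. \<forall>v \<in> Aset r k \<union> Bset k s. \<omega> v \<in> Xf r k s v}"
      using cnd_Collect[OF ks True] by auto
    have meas: "{\<omega> \<in> space ?M. \<forall>v \<in> Aset r k \<union> Bset k s. \<omega> v \<in> Xf r k s v} \<in> sets ?M"
      by (intro sets.sets_Collect_finite_All fin) simp
    have "emeasure ?M {\<omega> \<in> space ?M. \<forall>v \<in> Aset r k \<union> Bset k s. \<omega> v \<in> Xf r k s v}
        = (\<Prod>v \<in> Aset r k \<union> Bset k s. emeasure (measure_pmf (Tpmf P p q)) (Xf r k s v))"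
      by (rule PP.emeasure_PiM_Collect) (auto simp: Aset_def Bset_def)
    also have "\<dots> = (\<Prod>v \<in> Aset r k. emeasure (measure_pmf (Tpmf P p q)) (Xf r k s v))
                  * (\<Prod>v \<in> Bset k s. emeasure (measure_pmf (Tpmf P p q)) (Xf r k s v))"
      by (rule prod.union_disjoint) (auto simp: Aset_def Bset_def AB_disj[OF ks, unfolded Aset_def Bset_def])
    also have "(\<Prod>v \<in> Aset r k. emeasure (measure_pmf (Tpmf P p q)) (Xf r k s v)) = ennreal q ^ (r - k)"
    proof -
      have "(\<Prod>v \<in> Aset r k. emeasure (measure_pmf (Tpmf P p q)) (Xf r k s v)) = (\<Prod>v \<in> Aset r k. ennreal q)"
        using emeasure_T_up[OF assms(1-4), of P] by (intro prod.cong) (auto simp: XA)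
      also have "\<dots> = ennreal q ^ card (Aset r k)" by simp
      also have "card (Aset r k) = r - k"
        unfolding Aset_def by (subst card_image) (auto simp: inj_on_def)
      finally show ?thesis .
    qed
    also have "(\<Prod>v \<in> Bset k s. emeasure (measure_pmf (Tpmf P p q)) (Xf r k s v))
        = (\<Prod>j \<le> length s. emeasure (measure_pmf (Tpmf P p q)) (Xf r k s (zr k @ take j s)))"
      unfolding Bset_def
    proof (subst prod.reindex)
      show "inj_on (\<lambda>j. zr k @ take j s) {..length s}"
      proof (rule inj_onI)
        fix x y assume "x \<in> {..length s}" "y \<in> {..length s}" "zr k @ take x s = zr k @ take y s"
        then show "x = y" by (metis append_eq_append_conv atMost_iff length_take min.absorb2)
      qed
    qed simp
    also have "\<dots> = (\<Prod>j \<le> length s. (if j < length s then TT P (s ! j) else 1) * (if 0 < j then ennreal p else 1))"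
      by (intro prod.cong refl) (simp add: XB[OF ks] emeasure_T_down[OF assms(1-4)])
    also have "\<dots> = (\<Prod>j<length s. ennreal p * TT P (s ! j))"
      by (rule prod_shape)
    finally show ?thesis using True e meas by simp
  qed
  then show "emeasure (GW_perc P p q) {\<omega> \<in> space (GW_perc P p q). cnd \<omega> r R k s}
    = (if k + length s \<le> R then ennreal q ^ (r - k) * (\<Prod>j<length s. ennreal p * TT P (s ! j)) else 0)"
    and "{\<omega> \<in> space (GW_perc P p q). cnd \<omega> r R k s} \<in> sets (GW_perc P p q)"
    by (simp_all add: GW_eq)
qed

lemma AE_pos:
  assumes P0: "pmf P 0 = 0" and "0 \<le> p" "p \<le> 1" "0 \<le> q" "q \<le> 1"
  shows "AE \<omega> in GW_perc P p q. \<forall>v. 0 < fst (\<omega> v)"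
proof -
  interpret PP: product_prob_space "\<lambda>_::nat list. measure_pmf (Tpmf P p q)" UNIV
    by (rule PiM_product)
  let ?M = "PiM UNIV (\<lambda>_::nat list. measure_pmf (Tpmf P p q))"
  have "AE \<omega> in ?M. 0 < fst (\<omega> v)" for v
  proof (rule AE_I')
    let ?N = "{\<omega> \<in> space ?M. \<omega> v \<in> {t. fst t = 0}}"
    have "emeasure ?M ?N = emeasure (measure_pmf (Tpmf P p q)) {t. fst t = 0}"
      by (rule PP.emeasure_PiM_Collect_single) auto
    also have "\<dots> = 0"
      using emeasure_triple[of P "bernoulli_pmf p" "bernoulli_pmf q" "\<lambda>n. n = 0" "\<lambda>_. True" "\<lambda>_. True"] P0
      by (simp add: Tpmf_def emeasure_pmf_single)
    finally show "?N \<in> null_sets ?M" by (intro null_setsI) auto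
    show "{\<omega> \<in> space ?M. \<not> 0 < fst (\<omega> v)} \<subseteq> ?N" by auto
  qed
  then show ?thesis unfolding GW_eq by (simp add: AE_all_countable)
qed

definition geo :: "real \<Rightarrow> nat \<Rightarrow> real" where
  "geo x n = (\<Sum>m\<le>n. x ^ m)"

lemma SL_TT:
  assumes "integrable (measure_pmf P) real" "0 \<le> p"
  shows "(\<integral>\<^sup>+ s. (if length s \<le> n then (\<Prod>j<length s. ennreal p * TT P (s ! j)) else 0) \<partial>count_space UNIV)
     = ennreal (geo (offspring_mean P * p) n)"
proof -
  have m0: "0 \<le> offspring_mean P" unfolding offspring_mean_def by simp
  have A: "(\<integral>\<^sup>+ i. ennreal p * TT P i \<partial>count_space UNIV) = ennreal (offspring_mean P * p)"
    using sum_TT[OF assms(1)] assms(2) by (simp add: nn_integral_cmult ennreal_mult' mult.commute)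
  have "(\<integral>\<^sup>+ s. (if length s \<le> n then (\<Prod>j<length s. ennreal p * TT P (s ! j)) else 0) \<partial>count_space UNIV)
     = (\<Sum>m\<le>n. (\<integral>\<^sup>+ i. ennreal p * TT P i \<partial>count_space UNIV) ^ m)"
    using nn_list_geom[of n "\<lambda>i. ennreal p * TT P i"] by simp
  then show ?thesis
    unfolding A geo_def using assms m0
    by (simp add: ennreal_power)
qed

definition Gf :: "nat pmf \<Rightarrow> real \<Rightarrow> real \<Rightarrow> nat \<Rightarrow> nat \<Rightarrow> nat \<times> nat list \<Rightarrow> ennreal" where
  "Gf P p q r R ks = (if fst ks + length (snd ks) \<le> R
     then ennreal q ^ (r - fst ks) * (\<Prod>j<length (snd ks). ennreal p * TT P (snd ks ! j)) else 0)"

lemma geo_nonneg: "0 \<le> x \<Longrightarrow> 0 \<le> geo x n"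
  by (simp add: geo_def sum_nonneg)

lemma sum_Yr:
  assumes P0: "pmf P 0 = 0" and int: "integrable (measure_pmf P) real"
    and p: "0 \<le> p" and q: "0 \<le> q" and rR: "r \<le> R"
  shows "(\<integral>\<^sup>+ ks. Gf P p q r R ks \<partial>count_space (Yr r))
    = ennreal (geo (offspring_mean P * p) (R - r)
       + (\<Sum>k<r. q ^ (r - k) * (1 + p * (offspring_mean P - 1) * geo (offspring_mean P * p) (R - k - 1))))"
proof -
  let ?x = "offspring_mean P * p"
  let ?G = "Gf P p q r R"
  let ?F = "\<lambda>k. \<integral>\<^sup>+ s. ?G (k, s) * indicator (Yr r) (k, s) \<partial>count_space UNIV"
  have mu1: "1 \<le> offspring_mean P" by (rule mean_ge1[OF P0 int])
  have x0: "0 \<le> ?x" using mu1 p by simp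
  have "(\<integral>\<^sup>+ ks. ?G ks \<partial>count_space (Yr r)) = (\<integral>\<^sup>+ ks. ?G ks * indicator (Yr r) ks \<partial>count_space UNIV)"
    by (simp add: nn_integral_count_space_indicator)
  also have "\<dots> = (\<integral>\<^sup>+ k. ?F k \<partial>count_space UNIV)"
    by (subst nn_integral_fst_count_space[symmetric]) simp
  also have "\<dots> = (\<Sum>k\<in>{..r}. ?F k)"
    by (rule nn_integral_count_space') (auto simp: Yr_def)
  also have "\<dots> = ?F r + (\<Sum>k<r. ?F k)"
    by (simp add: lessThan_Suc_atMost[symmetric] add.commute)
  also have "?F r = ennreal (geo ?x (R - r))"
  proof -
    have "?F r = (\<integral>\<^sup>+ s. (if length s \<le> R - r then (\<Prod>j<length s. ennreal p * TT P (s ! j)) else 0) \<partial>count_space UNIV)"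
      using rR by (intro nn_integral_cong) (auto simp: Gf_def Yr_def)
    then show ?thesis using SL_TT[OF int p] by simp
  qed
  also have "(\<Sum>k<r. ?F k) = (\<Sum>k<r. ennreal (q ^ (r - k) * (1 + p * (offspring_mean P - 1) * geo ?x (R - k - 1))))"
  proof (rule sum.cong[OF refl])
    fix k assume "k \<in> {..<r}"
    then have kr: "k < r" by simp
    have "?F k = ?G (k, []) * indicator (Yr r) (k, [])
        + (\<integral>\<^sup>+ i. \<integral>\<^sup>+ s. ?G (k, i # s) * indicator (Yr r) (k, i # s) \<partial>count_space UNIV \<partial>count_space UNIV)"
      by (rule nn_list_split)
    also have "?G (k, []) * indicator (Yr r) (k, []) = ennreal (q ^ (r - k))"
      using kr rR q by (simp add: Gf_def Yr_def ennreal_power)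
    also have "(\<integral>\<^sup>+ i. \<integral>\<^sup>+ s. ?G (k, i # s) * indicator (Yr r) (k, i # s) \<partial>count_space UNIV \<partial>count_space UNIV)
       = (\<integral>\<^sup>+ i. \<integral>\<^sup>+ s. (ennreal (q ^ (r - k)) * ennreal p * (TT P i * indicator {i. i \<noteq> 0} i))
            * (if length s \<le> R - k - 1 then (\<Prod>j<length s. ennreal p * TT P (s ! j)) else 0)
            \<partial>count_space UNIV \<partial>count_space UNIV)"
    proof (intro nn_integral_cong)
      fix i s
      show "?G (k, i # s) * indicator (Yr r) (k, i # s) = (ennreal (q ^ (r - k)) * ennreal p * (TT P i * indicator {i. i \<noteq> 0} i))
            * (if length s \<le> R - k - 1 then (\<Prod>j<length s. ennreal p * TT P (s ! j)) else 0)"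
        using kr rR q
        by (auto simp: Gf_def Yr_def prod.lessThan_Suc_shift ennreal_power mult_ac split: split_indicator simp del: prod.lessThan_Suc)
    qed
    also have "\<dots> = (\<integral>\<^sup>+ i. (ennreal (q ^ (r - k)) * ennreal p * ennreal (geo ?x (R - k - 1))) * (TT P i * indicator {i. i \<noteq> 0} i) \<partial>count_space UNIV)"
      by (intro nn_integral_cong) (simp add: nn_integral_cmult SL_TT[OF int p] mult_ac)
    also have "\<dots> = ennreal (q ^ (r - k)) * ennreal p * ennreal (geo ?x (R - k - 1)) * ennreal (offspring_mean P - 1)"
      by (subst nn_integral_cmult) (simp, simp only: sum_TT_pos[OF P0 int])
    also have "ennreal (q ^ (r - k)) + ennreal (q ^ (r - k)) * ennreal p * ennreal (geo ?x (R - k - 1)) * ennreal (offspring_mean P - 1)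
        = ennreal (q ^ (r - k) * (1 + p * (offspring_mean P - 1) * geo ?x (R - k - 1)))"
    proof -
      have g0: "0 \<le> geo ?x (R - k - 1)" by (rule geo_nonneg[OF x0])
      have q0: "0 \<le> q ^ (r - k)" using q by simp
      have m0: "0 \<le> offspring_mean P - 1" using mu1 by simp
      have "q ^ (r - k) * (1 + p * (offspring_mean P - 1) * geo ?x (R - k - 1))
          = q ^ (r - k) + q ^ (r - k) * p * geo ?x (R - k - 1) * (offspring_mean P - 1)"
        by (simp add: algebra_simps)
      moreover have "ennreal (q ^ (r - k) + q ^ (r - k) * p * geo ?x (R - k - 1) * (offspring_mean P - 1))
          = ennreal (q ^ (r - k)) + ennreal (q ^ (r - k) * p * geo ?x (R - k - 1) * (offspring_mean P - 1))"
        using q0 p g0 m0 by (intro ennreal_plus) auto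
      moreover have "ennreal (q ^ (r - k) * p * geo ?x (R - k - 1) * (offspring_mean P - 1))
          = ennreal (q ^ (r - k)) * ennreal p * ennreal (geo ?x (R - k - 1)) * ennreal (offspring_mean P - 1)"
        using q0 p g0 m0 by (simp add: ennreal_mult)
      ultimately show ?thesis by simp
    qed
    finally show "?F k = ennreal (q ^ (r - k) * (1 + p * (offspring_mean P - 1) * geo ?x (R - k - 1)))" .
  qed
  also have "\<dots> = ennreal (\<Sum>k<r. q ^ (r - k) * (1 + p * (offspring_mean P - 1) * geo ?x (R - k - 1)))"
    using q p mu1 geo_nonneg[OF x0] by (intro sum_ennreal) simp
  also have "ennreal (geo ?x (R - r)) + \<dots> = ennreal (geo ?x (R - r)
       + (\<Sum>k<r. q ^ (r - k) * (1 + p * (offspring_mean P - 1) * geo ?x (R - k - 1))))"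
    using q p mu1 geo_nonneg[OF x0] by (intro ennreal_plus[symmetric] sum_nonneg) auto
  finally show ?thesis .
qed
lemma geo_closed: "x \<noteq> 1 \<Longrightarrow> geo x n = (1 - x ^ (n + 1)) / (1 - x)"
proof -
  assume "x \<noteq> 1"
  have "geo x n = (\<Sum>m<Suc n. x ^ m)" by (simp add: geo_def lessThan_Suc_atMost)
  also have "\<dots> = (x ^ Suc n - 1) / (x - 1)" using \<open>x \<noteq> 1\<close> by (rule geometric_sum)
  also have "\<dots> = (1 - x ^ (n + 1)) / (1 - x)" using \<open>x \<noteq> 1\<close> by (simp add: field_simps)
  finally show ?thesis .
qed

lemma alg_step:
  fixes mu p q Q Z X1 :: real
  assumes d: "1 - mu * p * q \<noteq> 0" "1 - mu * p \<noteq> 0" "1 - q \<noteq> 0"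
  shows "1 / (1 - mu * p) * (1 + q * ((1 - Q) / (1 - q)) * (1 - p) - X1 * ((1 - p * q * (1 + (mu - 1) * Z)) / (1 - mu * p * q)))
     + (q * Q + p * (mu - 1) * (q * Q - q * X1 * Z) / (1 - mu * p))
   = 1 / (1 - mu * p) * (1 + q * ((1 - q * Q) / (1 - q)) * (1 - p) - X1 * ((1 - p * q * (1 + (mu - 1) * (mu * p * q * Z))) / (1 - mu * p * q)))"
  using d by (simp add: divide_simps) algebra

lemma real_id:
  fixes mu p q :: real and n r :: nat
  assumes x1: "mu * p \<noteq> 1" and xq: "mu * p * q \<noteq> 1" and q1: "q \<noteq> 1"
  shows "geo (mu * p) n + (\<Sum>k<r. q ^ (r - k) * (1 + p * (mu - 1) * geo (mu * p) (n + r - k - 1)))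
    = 1 / (1 - mu * p) * (1 + q * ((1 - q ^ r) / (1 - q)) * (1 - p)
        - (mu * p) ^ (n + 1) * ((1 - p * q * (1 + (mu - 1) * (mu * p * q) ^ r)) / (1 - mu * p * q)))"
proof (induction r)
  case 0
  have d: "1 - mu * p * q \<noteq> 0" "1 - mu * p \<noteq> 0" using x1 xq by auto
  have "(1 - p * q * (1 + (mu - 1))) / (1 - mu * p * q) = 1"
    using d by (simp add: field_simps)
  then show ?case using geo_closed[OF x1, of n] by (simp add: field_simps)
next
  case (Suc r)
  have d: "1 - mu * p * q \<noteq> 0" "1 - mu * p \<noteq> 0" "1 - q \<noteq> 0" using x1 xq q1 by auto
  have sh: "(\<Sum>k<Suc r. q ^ (Suc r - k) * (1 + p * (mu - 1) * geo (mu * p) (n + Suc r - k - 1)))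
     = q ^ Suc r * (1 + p * (mu - 1) * geo (mu * p) (n + r))
       + (\<Sum>k<r. q ^ (r - k) * (1 + p * (mu - 1) * geo (mu * p) (n + r - k - 1)))"
    by (simp add: sum.lessThan_Suc_shift del: sum.lessThan_Suc)
  let ?x = "mu * p"
  have pw: "?x ^ (n + r + 1) * q ^ r = ?x ^ (n + 1) * (mu * p * q) ^ r"
    by (simp add: power_add power_mult_distrib mult_ac)
  have A: "q ^ Suc r * (1 + p * (mu - 1) * geo ?x (n + r))
      = q * q ^ r + p * (mu - 1) * (q * q ^ r - q * ?x ^ (n + 1) * (mu * p * q) ^ r) / (1 - mu * p)"
  proof -
    have "q ^ Suc r * (1 + p * (mu - 1) * geo ?x (n + r))
       = q * q ^ r + p * (mu - 1) * (q * q ^ r - q * (?x ^ (n + r + 1) * q ^ r)) / (1 - mu * p)"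
      using d by (simp add: geo_closed[OF x1] field_simps)
    then show ?thesis unfolding pw by (simp add: mult_ac)
  qed
  have F: "1 / (1 - mu * p) * (1 + q * ((1 - q ^ Suc r) / (1 - q)) * (1 - p)
        - (mu * p) ^ (n + 1) * ((1 - p * q * (1 + (mu - 1) * (mu * p * q) ^ Suc r)) / (1 - mu * p * q)))
     = 1 / (1 - mu * p) * (1 + q * ((1 - q * q ^ r) / (1 - q)) * (1 - p)
        - (mu * p) ^ (n + 1) * ((1 - p * q * (1 + (mu - 1) * (mu * p * q * (mu * p * q) ^ r))) / (1 - mu * p * q)))"
    by simp
  show ?case
    unfolding sh A F
    using Suc.IH alg_step[OF d, of "q ^ r" "(mu * p) ^ (n + 1)" "(mu * p * q) ^ r"]
    by linarith
qed


lemma vertex_finite: "finite {v. is_vertex \<omega> n v}"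
proof (induction n)
  case 0
  have "{v. is_vertex \<omega> 0 v} \<subseteq> {[]}" by (auto simp: is_vertex_def)
  then show ?case using finite_subset by blast
next
  case (Suc n)
  have "{v. is_vertex \<omega> (Suc n) v} \<subseteq> {v. is_vertex \<omega> n v} \<union> (\<Union>u\<in>{v. is_vertex \<omega> n v}. (\<lambda>i. u @ [i]) ` {..<fst (\<omega> u)})"
  proof
    fix v assume v: "v \<in> {v. is_vertex \<omega> (Suc n) v}"
    show "v \<in> {v. is_vertex \<omega> n v} \<union> (\<Union>u\<in>{v. is_vertex \<omega> n v}. (\<lambda>i. u @ [i]) ` {..<fst (\<omega> u)})"
    proof (cases "length v \<le> n")
      case True
      then show ?thesis using v by (auto simp: is_vertex_def)
    next
      case False
      then have "v \<noteq> []" by auto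
      then obtain u i where vu: "v = u @ [i]" by (metis rev_exhaust)
      then have "is_vertex \<omega> (Suc n) u" "i < fst (\<omega> u)" "length u < Suc n" using v is_vertex_snoc by auto
      then have "is_vertex \<omega> n u" by (auto simp: is_vertex_def)
      then show ?thesis using vu \<open>i < fst (\<omega> u)\<close> by auto
    qed
  qed
  moreover have "finite ({v. is_vertex \<omega> n v} \<union> (\<Union>u\<in>{v. is_vertex \<omega> n v}. (\<lambda>i. u @ [i]) ` {..<fst (\<omega> u)}))"
    using Suc.IH by auto
  ultimately show ?case using finite_subset by blast
qed

lemma wet_finite: "finite (wet_cluster \<omega> R x)"
proof -
  have "wet_cluster \<omega> R x \<subseteq> insert x {v. is_vertex \<omega> R v}"
  proof
    fix y assume "y \<in> wet_cluster \<omega> R x"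
    then have "(x, y) \<in> (open_arrows \<omega> R)\<^sup>*" by (simp add: wet_cluster_def)
    then show "y \<in> insert x {v. is_vertex \<omega> R v}"
      by (cases rule: rtrancl.cases) (auto simp: open_arrows_def)
  qed
  then show ?thesis using vertex_finite finite_subset by (metis finite_insert)
qed

theorem theorem1:
  fixes P :: "nat pmf" and p q :: real and r R :: nat
  assumes "pmf P 0 = 0"
    and "0 < p" "p < 1" "0 < q" "q < 1"
    and "r \<le> R"
    and "integrable (measure_pmf P) real"
    and "offspring_mean P * p \<noteq> 1"
    and "offspring_mean P * p * q \<noteq> 1"
  shows "(\<integral>\<^sup>+ \<omega>. ennreal (real (card (wet_cluster \<omega> R (replicate r 0)))) \<partial>GW_perc P p q)
     = ennreal (1 / (1 - offspring_mean P * p) *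
         (1 + q * ((1 - q ^ r) / (1 - q)) * (1 - p)
          - (offspring_mean P * p) ^ (R - r + 1) *
            ((1 - p * q * (1 + (offspring_mean P - 1) * (offspring_mean P * p * q) ^ r))
             / (1 - offspring_mean P * p * q))))"
proof -
  note P0 = assms(1) and rR = assms(6) and int = assms(7)
  have p0: "0 \<le> p" "p \<le> 1" and q0: "0 \<le> q" "q \<le> 1" using assms(2-5) by auto
  let ?M = "GW_perc P p q"
  let ?E = "\<lambda>ks. {\<omega> \<in> space ?M. cnd \<omega> r R (fst ks) (snd ks)}"
  let ?H = "\<lambda>\<omega>::config. \<integral>\<^sup>+ ks. indicator (?E ks) \<omega> \<partial>count_space (Yr r)"
  have sp: "\<omega> \<in> space ?M" for \<omega>
    by (simp add: GW_perc_def space_PiM)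
  have AEeq: "AE \<omega> in ?M. ennreal (real (card (wet_cluster \<omega> R (replicate r 0)))) = ?H \<omega>"
    using AE_pos[OF P0 p0 q0]
  proof (rule AE_mp, intro AE_I2 impI)
    fix \<omega> :: config assume hN: "\<forall>v. 0 < fst (\<omega> v)"
    let ?C = "wet_cluster \<omega> R (replicate r 0)"
    have "ennreal (real (card ?C)) = emeasure (count_space UNIV) ?C"
      using wet_finite[of \<omega> R "replicate r 0"] by (simp add: ennreal_of_nat_eq_real_of_nat)
    also have "\<dots> = (\<integral>\<^sup>+ y. indicator ?C y \<partial>count_space UNIV)"
      by simp
    also have "\<dots> = (\<integral>\<^sup>+ ks. indicator ?C ((\<lambda>(k, s). zr k @ s) ks) \<partial>count_space (Yr r))"
      by (rule nn_integral_bij_count_space[OF Yr_bij, symmetric])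
    also have "\<dots> = ?H \<omega>"
    proof (intro nn_integral_cong)
      fix ks assume "ks \<in> space (count_space (Yr r))"
      then have ks: "(fst ks, snd ks) \<in> Yr r" by simp
      show "indicator ?C ((\<lambda>(k, s). zr k @ s) ks) = indicator (?E ks) \<omega>"
        using wet_char[OF hN rR ks] sp[of \<omega>] by (cases ks) (simp split: split_indicator)
    qed
    finally show "ennreal (real (card ?C)) = ?H \<omega>" .
  qed
  have "(\<integral>\<^sup>+ \<omega>. ennreal (real (card (wet_cluster \<omega> R (replicate r 0)))) \<partial>?M) = (\<integral>\<^sup>+ \<omega>. ?H \<omega> \<partial>?M)"
    by (rule nn_integral_cong_AE[OF AEeq])
  also have "\<dots> = (\<integral>\<^sup>+ ks. \<integral>\<^sup>+ \<omega>. indicator (?E ks) \<omega> \<partial>?M \<partial>count_space (Yr r))"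
  proof (rule nn_integral_count_space_nn_integral)
    show "countable (Yr r)" by (rule countableI_type)
    fix ks assume "ks \<in> Yr r"
    then have ks: "(fst ks, snd ks) \<in> Yr r" by simp
    show "(\<lambda>\<omega>. indicator (?E ks) \<omega>) \<in> borel_measurable ?M"
      using event_meas(2)[OF p0 q0 ks, of P R] by (intro borel_measurable_indicator) simp
  qed
  also have "\<dots> = (\<integral>\<^sup>+ ks. Gf P p q r R ks \<partial>count_space (Yr r))"
  proof (intro nn_integral_cong)
    fix ks assume "ks \<in> space (count_space (Yr r))"
    then have ks: "(fst ks, snd ks) \<in> Yr r" by simp
    show "(\<integral>\<^sup>+ \<omega>. indicator (?E ks) \<omega> \<partial>?M) = Gf P p q r R ks"
      using event_meas[OF p0 q0 ks, of P R] by (simp add: Gf_def)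
  qed
  also have "\<dots> = ennreal (geo (offspring_mean P * p) (R - r)
       + (\<Sum>k<r. q ^ (r - k) * (1 + p * (offspring_mean P - 1) * geo (offspring_mean P * p) (R - k - 1))))"
    by (rule sum_Yr[OF P0 int p0(1) q0(1) rR])
  also have "geo (offspring_mean P * p) (R - r)
       + (\<Sum>k<r. q ^ (r - k) * (1 + p * (offspring_mean P - 1) * geo (offspring_mean P * p) (R - k - 1)))
     = geo (offspring_mean P * p) (R - r)
       + (\<Sum>k<r. q ^ (r - k) * (1 + p * (offspring_mean P - 1) * geo (offspring_mean P * p) ((R - r) + r - k - 1)))"
    using rR by simp
  also have "\<dots> = 1 / (1 - offspring_mean P * p) *
         (1 + q * ((1 - q ^ r) / (1 - q)) * (1 - p)
          - (offspring_mean P * p) ^ ((R - r) + 1) *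
            ((1 - p * q * (1 + (offspring_mean P - 1) * (offspring_mean P * p * q) ^ r))
             / (1 - offspring_mean P * p * q)))"
    by (rule real_id) (use assms in auto)
  finally show ?thesis by simp
qed

end
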